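(* Let $m\ge1$ and $n\ge0$, and let $\phi$ be an $r$-simplex of $(\Delta^1)^{m+n}$, viewed as a function $\phi\colon\{1,\dots,m+n\}\to\{1,\dots,r,\pm\infty\}$, which is unmarked in $(\Delta^1)^{\otimes(m+n)}$. Then $\phi$ is marked in $T(\widetilde\square^m)\otimes T(\square^n)=(\Delta^1)^{\otimes m}_e\otimes(\Delta^1)^{\otimes n}$ if and only if: (1) $r\ge m$; (2) $\phi(i)=i$ for all $1\le i\le m$; and (3) there does not exist a sequence $m<i_m<i_{m+1}<\dots<i_r\le m+n$ with $\phi(i_p)=p$ for all $m\le p\le r$.
   Context: An $r$-simplex of the simplicial set $(\Delta^1)^N=N([1]^N)$ is identified with the function $\phi\colon\{1,\dots,N\}\to\{1,\dots,r,\pm\infty\}$ defined by: $\phi(i)=+\infty$ if the $i$-th coordinate of the last vertex is $0$; $\phi(i)=p$ if the $i$-th coordinate of vertex $p-1$ is $0$ and of vertex $p$ is $1$; $\phi(i)=-\infty$ if the $i$-th coordinate of vertex $0$ is $1$ (this is a bijection). Marked simplicial sets have marked simplices of positive dimension containing all degenerate ones. Verity's Gray tensor $X\otimes Y$ has underlying $X\times Y$, with $(x,y)\in X_r\times Y_r$ marked iff for every $0\le i\le r$ the restriction of $x$ to vertices $\{0,\dots,i\}$ is marked or the restriction of $y$ to vertices $\{i,\dots,r\}$ is marked. $(\Delta^1)^{\otimes N}$ is the $N$-fold Gray tensor power of minimally marked $\Delta^1$; in it, an $r$-simplex $\phi$ is unmarked iff there exist $1\le i_1<\dots<i_r\le N$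 with $\phi(i_p)=p$ for all $p$. $(\Delta^1)^{\otimes m}_e$ is $(\Delta^1)^{\otimes m}$ with additionally the $m$-simplex $\iota_m$ (given by $\iota_m(i)=i$) marked. Here $(\Delta^1)^{\otimes m}_e\otimes(\Delta^1)^{\otimes n}$ is identified with a marking on $(\Delta^1)^{m+n}$ via $(\Delta^1)^m\times(\Delta^1)^n=(\Delta^1)^{m+n}$, the first $m$ coordinates coming from the first factor. *)

theory Defs
  imports Main
begin

text \<open>
  An r-simplex of (Delta^1)^N = N([1]^N) is a chain of vertices v_0 <= ... <= v_r in {0,1}^N.
  We represent it by  v :: nat => nat => bool, where  v p i  is the i-th coordinate
  (1 <= i <= N) of vertex p (0 <= p <= r); outside this range v is False.
  A marking on the family of products (Delta^1)^N is a predicate on (r, v).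
\<close>

type_synonym simp = "nat \<Rightarrow> nat \<Rightarrow> bool"
type_synonym marking = "nat \<Rightarrow> simp \<Rightarrow> bool"

definition simplex :: "nat \<Rightarrow> nat \<Rightarrow> simp \<Rightarrow> bool" where
  "simplex N r v \<longleftrightarrow>
     (\<forall>p i. v p i \<longrightarrow> p \<le> r \<and> 1 \<le> i \<and> i \<le> N) \<and>
     (\<forall>p q i. p \<le> q \<and> q \<le> r \<and> v p i \<longrightarrow> v q i)"

definition restr :: "nat \<Rightarrow> nat \<Rightarrow> simp \<Rightarrow> simp" where
  "restr a b v = (\<lambda>p i. p \<le> b - a \<and> v (a + p) i)"

definition left_part :: "nat \<Rightarrow> simp \<Rightarrow> simp" where
  "left_part m v = (\<lambda>p i. i \<le> m \<and> v p i)"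

definition right_part :: "nat \<Rightarrow> simp \<Rightarrow> simp" where
  "right_part m v = (\<lambda>p i. 1 \<le> i \<and> v p (m + i))"

text \<open>Verity's Gray tensor X (x) Y, with X a marking on (Delta^1)^m, Y on (Delta^1)^n,
  giving a marking on (Delta^1)^(m+n) (first m coordinates from X).\<close>
definition gray :: "marking \<Rightarrow> nat \<Rightarrow> marking \<Rightarrow> marking" where
  "gray MX m MY r v \<longleftrightarrow>
     (\<forall>i\<le>r. MX i (restr 0 i (left_part m v)) \<or> MY (r - i) (restr i r (right_part m v)))"

text \<open>Minimally marked Delta^1: marked = degenerate of positive dimension.\<close>
definition degenerate :: "nat \<Rightarrow> simp \<Rightarrow> bool" where
  "degenerate r v \<longleftrightarrow> (\<exists>p<r. \<forall>i. v p i = v (Suc p) i)"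

definition delta1_min :: marking where
  "delta1_min r v \<longleftrightarrow> 1 \<le> r \<and> degenerate r v"

text \<open>N-fold Gray tensor power; the 0-fold power is the unit Delta^0 (all simplices
  of positive dimension are degenerate, hence marked).\<close>
fun gray_pow :: "nat \<Rightarrow> marking" where
  "gray_pow 0 = (\<lambda>r v. 1 \<le> r)"
| "gray_pow (Suc k) = gray (gray_pow k) k delta1_min"

text \<open>The m-simplex iota_m: iota_m(i) = i, i.e. coordinate i of vertex p is 1 iff i <= p.\<close>
definition iota :: "nat \<Rightarrow> simp" where
  "iota m = (\<lambda>p i. 1 \<le> i \<and> i \<le> p \<and> p \<le> m)"

definition gray_pow_e :: "nat \<Rightarrow> marking" where
  "gray_pow_e m r v \<longleftrightarrow> gray_pow m r v \<or> (r = m \<and> v = iota m)"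

datatype ext = NegInf | Fin nat | PosInf

definition phi :: "nat \<Rightarrow> simp \<Rightarrow> nat \<Rightarrow> ext" where
  "phi r v i = (if \<not> v r i then PosInf else if v 0 i then NegInf
                else Fin (LEAST p. v p i))"

end

theory Submission
  imports Defs
begin

fun G :: "(nat \<Rightarrow> nat \<Rightarrow> bool) \<Rightarrow> nat \<Rightarrow> nat \<Rightarrow> nat \<Rightarrow> nat \<Rightarrow> bool" where
  "G J a 0 c d = (d \<le> c)"
| "G J a (Suc b) c d = (d \<le> c \<or> (a < Suc b \<and> (G J a b c d \<or> (J (Suc b) d \<and> G J a b c (d - 1)))))"

lemma G_triv: "d \<le> c \<Longrightarrow> G J a b c d"
  by (cases b) auto

lemma G_low: "b \<le> a \<Longrightarrow> G J a b c d = (d \<le> c)"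
  by (induction b) auto

lemma G_mono_b: "G J a b c d \<Longrightarrow> b \<le> b' \<Longrightarrow> G J a b' c d"
proof (induction b')
  case 0 then show ?case by simp
next
  case (Suc b')
  show ?case
  proof (cases "b = Suc b'")
    case True then show ?thesis using Suc by simp
  next
    case False
    then have "G J a b' c d" using Suc by simp
    then show ?thesis
      by (cases "b' < a") (auto simp: G_low G_triv)
  qed
qed

lemma G_mono_c: "G J a b c d \<Longrightarrow> c \<le> c' \<Longrightarrow> G J a b c' d"
proof (induction b arbitrary: d)
  case 0 then show ?case by simp
next
  case (Suc b)
  then show ?case by (cases "d \<le> c'") auto
qed

lemma G_bound: "G J a b c d \<Longrightarrow> d \<le> c + (b - a)"
proof (induction b arbitrary: d)
  case 0 then show ?case by simp
next
  case (Suc b)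
  show ?case
  proof (cases "d \<le> c")
    case False
    with Suc.prems have ab: "a < Suc b" and "G J a b c d \<or> G J a b c (d - 1)" by auto
    then show ?thesis using Suc.IH[of d] Suc.IH[of "d-1"] by auto
  qed simp
qed

lemma G_cong: "(\<And>j p. a < j \<Longrightarrow> j \<le> b \<Longrightarrow> c < p \<Longrightarrow> p \<le> d \<Longrightarrow> J j p = J' j p) \<Longrightarrow> G J a b c d = G J' a b c d"
proof (induction b arbitrary: d)
  case 0 then show ?case by simp
next
  case (Suc b)
  have 1: "G J a b c d = G J' a b c d" by (rule Suc.IH) (rule Suc.prems, auto)
  have 2: "G J a b c (d-1) = G J' a b c (d-1)" by (rule Suc.IH) (rule Suc.prems, auto)
  show ?case
  proof (cases "d \<le> c")
    case True then show ?thesis by simp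
  next
    case False
    show ?thesis
    proof (cases "a < Suc b")
      case True
      then have "J (Suc b) d = J' (Suc b) d" using False by (intro Suc.prems) auto
      with 1 2 show ?thesis by simp
    qed simp
  qed
qed

lemma G_shift: "G J (a+f) (b+f) (c+e) (d+e) = G (\<lambda>j p. J (j+f) (p+e)) a b c d"
proof (induction b arbitrary: d)
  case 0 then show ?case by (simp add: G_low)
next
  case (Suc b)
  show ?case
  proof (cases "d \<le> c")
    case True then show ?thesis by (simp add: G_triv)
  next
    case False
    then have "d + e - 1 = (d - 1) + e" by simp
    then show ?thesis using Suc.IH[of d] Suc.IH[of "d-1"] False by simp
  qed
qed

lemma G_split: "G J a b c d \<Longrightarrow> a \<le> mid \<Longrightarrow> mid \<le> b \<Longrightarrow> c \<le> d \<Longrightarrow>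
   \<exists>k. c \<le> k \<and> k \<le> d \<and> G J a mid c k \<and> G J mid b k d"
proof (induction b arbitrary: d)
  case 0 then show ?case by (intro exI[of _ d]) (auto simp: G_triv)
next
  case (Suc b)
  show ?case
  proof (cases "mid = Suc b")
    case True then show ?thesis using Suc.prems by (intro exI[of _ d]) (auto simp: G_triv)
  next
    case False
    then have mb: "mid \<le> b" using Suc.prems by simp
    show ?thesis
    proof (cases "d \<le> c")
      case True then show ?thesis using Suc.prems by (intro exI[of _ c]) (auto simp: G_triv)
    next
      case dc: False
      from Suc.prems(1) dc consider "G J a b c d" | "J (Suc b) d" "G J a b c (d - 1)" by auto
      then show ?thesis
      proof cases
        case 1
        from Suc.IH[OF 1 Suc.prems(2) mb Suc.prems(4)] obtain k where
          "c \<le> k" "k \<le> d" "G J a mid c k" "G J mid b k d" by blast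
        then show ?thesis using mb by (intro exI[of _ k]) (auto intro: G_mono_b)
      next
        case 2
        from dc have "c \<le> d - 1" by simp
        from Suc.IH[OF 2(2) Suc.prems(2) mb this] obtain k where
          "c \<le> k" "k \<le> d - 1" "G J a mid c k" "G J mid b k (d-1)" by auto
        then show ?thesis using mb 2(1) dc by (intro exI[of _ k]) auto
      qed
    qed
  qed
qed

lemma G_diag: "(\<And>p. 1 \<le> p \<Longrightarrow> p \<le> d \<Longrightarrow> J p p) \<Longrightarrow> G J 0 d 0 d"
  by (induction d) auto

lemma G_seq1: "G J a b c d \<Longrightarrow> c < d \<Longrightarrow>
  (\<exists>s. a < s (Suc c) \<and> s d \<le> b \<and> (\<forall>p q. Suc c \<le> p \<and> p < q \<and> q \<le> d \<longrightarrow> s p < s q) \<and> (\<forall>p\<in>{Suc c..d}. J (s p) p))"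
proof (induction b arbitrary: d)
  case 0 then show ?case by simp
next
  case (Suc b)
  from Suc.prems consider "G J a b c d" | "a < Suc b" "J (Suc b) d" "G J a b c (d - 1)" by auto
  then show ?case
  proof cases
    case 1
    from Suc.IH[OF 1 Suc.prems(2)] obtain s where
      "a < s (Suc c) \<and> s d \<le> b \<and> (\<forall>p q. Suc c \<le> p \<and> p < q \<and> q \<le> d \<longrightarrow> s p < s q) \<and> (\<forall>p\<in>{Suc c..d}. J (s p) p)" by blast
    then show ?thesis by (intro exI[of _ s]) auto
  next
    case 2
    show ?thesis
    proof (cases "c < d - 1")
      case False
      then have "d = Suc c" using Suc.prems(2) by simp
      then show ?thesis using 2 by (intro exI[of _ "\<lambda>_. Suc b"]) auto
    next
      case True
      from Suc.IH[OF 2(3) True] obtain s where s1: "a < s (Suc c)" and s2: "s (d-1) \<le> b"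
        and s3: "\<forall>p q. Suc c \<le> p \<and> p < q \<and> q \<le> d - 1 \<longrightarrow> s p < s q"
        and s4: "\<forall>p\<in>{Suc c..d-1}. J (s p) p" by blast
      define s' where "s' = s(d := Suc b)"
      have le: "s p \<le> b" if "Suc c \<le> p" "p \<le> d - 1" for p
      proof (cases "p = d - 1")
        case True then show ?thesis using s2 by simp
      next
        case False then have "s p < s (d-1)" using s3 that by auto
        then show ?thesis using s2 by simp
      qed
      have "\<forall>p q. Suc c \<le> p \<and> p < q \<and> q \<le> d \<longrightarrow> s' p < s' q"
      proof (intro allI impI)
        fix p q assume h: "Suc c \<le> p \<and> p < q \<and> q \<le> d"
        show "s' p < s' q"
        proof (cases "q = d")
          case True
          have "s p \<le> b" using h by (intro le) auto
          then show ?thesis using h True by (simp add: s'_def)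
        next
          case False
          then have "q \<le> d - 1" using h by arith
          then have "s p < s q" using h by (intro s3[rule_format]) simp
          then show ?thesis using h False by (simp add: s'_def)
        qed
      qed
      moreover have "\<forall>p\<in>{Suc c..d}. J (s' p) p"
        using s4 2(2) by (auto simp: s'_def)
      moreover have "a < s' (Suc c)" using s1 True by (auto simp: s'_def)
      moreover have "s' d \<le> Suc b" by (simp add: s'_def)
      ultimately show ?thesis by blast
    qed
  qed
qed

lemma G_seq2: "c < d \<Longrightarrow> a < s (Suc c) \<Longrightarrow> s d \<le> b \<Longrightarrow> (\<forall>p q. Suc c \<le> p \<and> p < q \<and> q \<le> d \<longrightarrow> s p < s q)
  \<Longrightarrow> (\<forall>p\<in>{Suc c..d}. J (s p) p) \<Longrightarrow> G J a b c d"
proof (induction b arbitrary: d)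
  case 0
  have "s (Suc c) \<le> s d"
  proof (cases "Suc c = d")
    case False
    then have "Suc c < d" using 0(1) by simp
    then have "s (Suc c) < s d" using 0(4) by (intro 0(4)[rule_format]) simp
    then show ?thesis by simp
  qed simp
  then show ?case using 0(2,3) by simp
next
  case (Suc b)
  note P = Suc.prems
  show ?case
  proof (cases "s d \<le> b")
    case True
    have "G J a b c d" by (rule Suc.IH[OF P(1,2) True P(4,5)])
    then show ?thesis by (rule G_mono_b) simp
  next
    case False
    then have sd: "s d = Suc b" using P(3) by simp
    have "s (Suc c) \<le> s d"
    proof (cases "Suc c = d")
      case False
      then have "Suc c < d" using P(1) by simp
      then have "s (Suc c) < s d" by (intro P(4)[rule_format]) simp
      then show ?thesis by simp
    qed simp
    then have ab: "a < Suc b" using P(2) sd by simp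
    have "d \<in> {Suc c..d}" using P(1) by simp
    then have J: "J (Suc b) d" using P(5) sd by (metis)
    have "G J a b c (d - 1)"
    proof (cases "c < d - 1")
      case True
      have "s (d - 1) < s d" using True by (intro P(4)[rule_format]) simp
      then have sd1: "s (d - 1) \<le> b" using sd by simp
      have m4: "\<forall>p q. Suc c \<le> p \<and> p < q \<and> q \<le> d - 1 \<longrightarrow> s p < s q"
      proof (intro allI impI)
        fix p q assume "Suc c \<le> p \<and> p < q \<and> q \<le> d - 1"
        then show "s p < s q" by (intro P(4)[rule_format]) arith
      qed
      have m5: "\<forall>p\<in>{Suc c..d - 1}. J (s p) p"
      proof
        fix p assume "p \<in> {Suc c..d - 1}"
        then have "p \<in> {Suc c..d}" by auto
        then show "J (s p) p" using P(5) by blast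
      qed
      show ?thesis by (rule Suc.IH[OF True P(2) sd1 m4 m5])
    qed (simp add: G_triv)
    then show ?thesis using ab J by simp
  qed
qed


definition jmpf :: "simp \<Rightarrow> nat \<Rightarrow> nat \<Rightarrow> bool" where
  "jmpf v j p = (v p j \<and> \<not> v (p - 1) j)"

lemma simplex_mono: "simplex N r v \<Longrightarrow> p \<le> q \<Longrightarrow> q \<le> r \<Longrightarrow> v p i \<Longrightarrow> v q i"
  unfolding simplex_def by blast

lemma simplex_rng: "simplex N r v \<Longrightarrow> v p i \<Longrightarrow> p \<le> r \<and> 1 \<le> i \<and> i \<le> N"
  unfolding simplex_def by blast

lemma phi_Fin: assumes "simplex N r v" "1 \<le> p" "p \<le> r"
  shows "phi r v j = Fin p \<longleftrightarrow> jmpf v j p"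
proof
  assume h: "phi r v j = Fin p"
  then have vr: "v r j" and v0: "\<not> v 0 j" and L: "(LEAST q. v q j) = p"
    by (auto simp: phi_def split: if_splits)
  have "v p j" using LeastI[of "\<lambda>q. v q j", OF vr] L by simp
  moreover have "\<not> v (p - 1) j" using not_less_Least[of "p - 1" "\<lambda>q. v q j"] L assms(2) by simp
  ultimately show "jmpf v j p" by (simp add: jmpf_def)
next
  assume h: "jmpf v j p"
  then have vp: "v p j" and np: "\<not> v (p-1) j" by (auto simp: jmpf_def)
  have vr: "v r j" using simplex_mono[OF assms(1) assms(3) order_refl vp] .
  have v0: "\<not> v 0 j"
  proof
    assume "v 0 j"
    then have "v (p - 1) j" using simplex_mono[OF assms(1), of 0 "p-1" j] assms(3) by simp
    then show False using np by simp
  qed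
  have "(LEAST q. v q j) = p"
  proof (rule Least_equality)
    show "v p j" by fact
    fix y assume "v y j"
    show "p \<le> y"
    proof (rule ccontr)
      assume "\<not> p \<le> y"
      then have "y \<le> p - 1" by simp
      then show False using simplex_mono[OF assms(1) \<open>y \<le> p - 1\<close> _ \<open>v y j\<close>] np assms by auto
    qed
  qed
  then show "phi r v j = Fin p" using vr v0 by (simp add: phi_def)
qed

lemma simplex_left: assumes s: "simplex (k + n) r v" and ir: "i \<le> r"
  shows "simplex k i (restr 0 i (left_part k v))"
proof -
  have A: "p \<le> i \<and> 1 \<le> j \<and> j \<le> k" if "restr 0 i (left_part k v) p j" for p j
  proof -
    have "v p j" "p \<le> i" "j \<le> k" using that by (auto simp: restr_def left_part_def)
    then show ?thesis using simplex_rng[OF s \<open>v p j\<close>] by simp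
  qed
  have B: "restr 0 i (left_part k v) q j" if "p \<le> q" "q \<le> i" "restr 0 i (left_part k v) p j" for p q j
  proof -
    have "v p j" "j \<le> k" using that by (auto simp: restr_def left_part_def)
    then have "v q j" using simplex_mono[OF s, of p q j] that ir by simp
    then show ?thesis using that \<open>j \<le> k\<close> by (simp add: restr_def left_part_def)
  qed
  show ?thesis unfolding simplex_def using A B by blast
qed

lemma simplex_right: "simplex (m + n) r v \<Longrightarrow> i \<le> r \<Longrightarrow> simplex n (r - i) (restr i r (right_part m v))"
proof -
  assume s: "simplex (m + n) r v" and ir: "i \<le> r"
  have A: "p \<le> r - i \<and> 1 \<le> j \<and> j \<le> n" if "restr i r (right_part m v) p j" for p j
  proof -
    have "v (i + p) (m + j)" "p \<le> r - i" "1 \<le> j" using that by (auto simp: restr_def right_part_def)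
    then show ?thesis using simplex_rng[OF s, of "i+p" "m+j"] by simp
  qed
  have B: "restr i r (right_part m v) q j" if "p \<le> q" "q \<le> r - i" "restr i r (right_part m v) p j" for p q j
  proof -
    have "v (i + p) (m + j)" "p \<le> r - i" "1 \<le> j" using that by (auto simp: restr_def right_part_def)
    then have "v (i + q) (m + j)" using simplex_mono[OF s, of "i+p" "i+q"] that ir by simp
    then show ?thesis using that \<open>1 \<le> j\<close> by (simp add: restr_def right_part_def)
  qed
  show ?thesis unfolding simplex_def using A B by blast
qed

lemma jmpf_left: "1 \<le> p \<Longrightarrow> p \<le> i \<Longrightarrow> j \<le> k \<Longrightarrow> jmpf (restr 0 i (left_part k v)) j p = jmpf v j p"
  by (auto simp: jmpf_def restr_def left_part_def)

lemma jmpf_right: "1 \<le> q \<Longrightarrow> q \<le> r - i \<Longrightarrow> 1 \<le> j \<Longrightarrow> i \<le> r \<Longrightarrow>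
   jmpf (restr i r (right_part m v)) j q = jmpf v (j + m) (q + i)"
  by (auto simp: jmpf_def restr_def right_part_def add.commute)

lemma G_left: "G (jmpf (restr 0 i (left_part k v))) 0 k 0 i = G (jmpf v) 0 k 0 i"
  by (rule G_cong) (simp add: jmpf_left)

lemma G_right: assumes "i \<le> r"
  shows "G (jmpf (restr i r (right_part m v))) 0 n 0 (r - i) = G (jmpf v) m (m + n) i r"
proof -
  have "G (jmpf v) (0 + m) (n + m) (0 + i) ((r - i) + i) = G (\<lambda>j p. jmpf v (j + m) (p + i)) 0 n 0 (r - i)"
    by (rule G_shift)
  also have "\<dots> = G (jmpf (restr i r (right_part m v))) 0 n 0 (r - i)"
    by (rule G_cong) (simp add: jmpf_right assms)
  finally show ?thesis using assms by (simp add: add.commute)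
qed

lemma delta_right: assumes s: "simplex (Suc k) r v" and ir: "i \<le> r"
  shows "delta1_min (r - i) (restr i r (right_part k v)) \<longleftrightarrow>
    (i + 2 \<le> r \<or> (i + 1 = r \<and> \<not> jmpf v (Suc k) r))"
proof -
  let ?w = "restr i r (right_part k v)"
  let ?u = "\<lambda>q. v q (Suc k)"
  have step: "(\<forall>j. ?w p j = ?w (Suc p) j) \<longleftrightarrow> ?u (i + p) = ?u (i + Suc p)" if "p < r - i" for p
  proof
    assume "\<forall>j. ?w p j = ?w (Suc p) j"
    then have "?w p 1 = ?w (Suc p) 1" by blast
    then show "?u (i + p) = ?u (i + Suc p)" using that by (simp add: restr_def right_part_def)
  next
    assume h: "?u (i + p) = ?u (i + Suc p)"
    show "\<forall>j. ?w p j = ?w (Suc p) j"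
    proof
      fix j
      show "?w p j = ?w (Suc p) j"
      proof (cases "j = 1")
        case True then show ?thesis using h that by (simp add: restr_def right_part_def)
      next
        case False
        show ?thesis
        proof (cases "j = 0")
          case True then show ?thesis by (simp add: restr_def right_part_def)
        next
        case False3: False
        have "\<not> v q (k + j)" for q using simplex_rng[OF s, of q "k + j"] False False3 by auto
        then show ?thesis by (simp add: restr_def right_part_def)
      qed
      qed
    qed
  qed
  have mono: "?u a \<Longrightarrow> a \<le> b \<Longrightarrow> b \<le> r \<Longrightarrow> ?u b" for a b using simplex_mono[OF s] by blast
  have D: "delta1_min (r - i) ?w \<longleftrightarrow> (\<exists>p < r - i. ?u (i + p) = ?u (i + Suc p))"
    unfolding delta1_min_def degenerate_def using step by (auto simp del: add_Suc_right)
  show ?thesis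
  proof (cases "i + 2 \<le> r")
    case True
    have "\<exists>p < r - i. ?u (i + p) = ?u (i + Suc p)"
    proof (cases "?u i = ?u (i + 1)")
      case True then show ?thesis using \<open>i + 2 \<le> r\<close> by (intro exI[of _ 0]) auto
    next
      case False
      then have "?u (i+1)" using mono[of i "i+1"] \<open>i + 2 \<le> r\<close> by auto
      then have "?u (i+2)" using mono[of "i+1" "i+2"] \<open>i + 2 \<le> r\<close> by auto
      then show ?thesis using \<open>?u (i+1)\<close> \<open>i + 2 \<le> r\<close> by (intro exI[of _ 1]) auto
    qed
    then show ?thesis using D True by simp
  next
    case False
    show ?thesis
    proof (cases "i + 1 = r")
      case True
      have "(\<exists>p < r - i. ?u (i + p) = ?u (i + Suc p)) \<longleftrightarrow> ?u i = ?u r" using True by auto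
      also have "\<dots> \<longleftrightarrow> \<not> jmpf v (Suc k) r" using mono[of i r] True by (auto simp: jmpf_def)
      finally show ?thesis using D False True by simp
    next
      case False2: False
      then have "r - i = 0" using False ir by simp
      then show ?thesis using D False False2 by simp
    qed
  qed
qed

lemma gray_pow_char: "simplex N r v \<Longrightarrow> gray_pow N r v \<longleftrightarrow> \<not> G (jmpf v) 0 N 0 r"
proof (induction N arbitrary: r v)
  case 0 then show ?case by auto
next
  case (Suc k)
  have L: "gray_pow k i (restr 0 i (left_part k v)) \<longleftrightarrow> \<not> G (jmpf v) 0 k 0 i" if "i \<le> r" for i
  proof -
    have "simplex k i (restr 0 i (left_part k v))"
      using simplex_left[of k 1 r v i] Suc.prems that by simp
    then show ?thesis using Suc.IH G_left by simp
  qed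
  have "gray_pow (Suc k) r v \<longleftrightarrow> (\<forall>i\<le>r. \<not> G (jmpf v) 0 k 0 i \<or> i + 2 \<le> r \<or> (i + 1 = r \<and> \<not> jmpf v (Suc k) r))"
    using L delta_right[OF Suc.prems] by (simp add: gray_def)
  also have "\<dots> \<longleftrightarrow> \<not> G (jmpf v) 0 (Suc k) 0 r"
  proof
    assume A: "\<forall>i\<le>r. \<not> G (jmpf v) 0 k 0 i \<or> i + 2 \<le> r \<or> (i + 1 = r \<and> \<not> jmpf v (Suc k) r)"
    have r1: "1 \<le> r"
    proof (rule ccontr)
      assume "\<not> 1 \<le> r"
      then have "r = 0" by simp
      then show False using A[rule_format, of 0] G_triv[of 0 0 "jmpf v" 0 k] by simp
    qed
    have a: "\<not> G (jmpf v) 0 k 0 r" using A[rule_format, of r] by auto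
    have b: "\<not> G (jmpf v) 0 k 0 (r - 1) \<or> \<not> jmpf v (Suc k) r" using A[rule_format, of "r - 1"] r1 by auto
    show "\<not> G (jmpf v) 0 (Suc k) 0 r" using r1 a b by auto
  next
    assume B: "\<not> G (jmpf v) 0 (Suc k) 0 r"
    then have r1: "\<not> r \<le> 0" and a: "\<not> G (jmpf v) 0 k 0 r"
      and b: "\<not> (jmpf v (Suc k) r \<and> G (jmpf v) 0 k 0 (r - 1))" by auto
    show "\<forall>i\<le>r. \<not> G (jmpf v) 0 k 0 i \<or> i + 2 \<le> r \<or> (i + 1 = r \<and> \<not> jmpf v (Suc k) r)"
    proof (intro allI impI)
      fix i assume "i \<le> r"
      then consider "i = r" | "i + 1 = r" | "i + 2 \<le> r" by linarith
      then show "\<not> G (jmpf v) 0 k 0 i \<or> i + 2 \<le> r \<or> (i + 1 = r \<and> \<not> jmpf v (Suc k) r)"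
      proof cases
        case 2 then have "i = r - 1" by simp
        then show ?thesis using b 2 by auto
      qed (use a in auto)
    qed
  qed
  finally show ?case .
qed

lemma iota_char: assumes s: "simplex (m + n) r v" and mr: "m \<le> r"
  shows "restr 0 m (left_part m v) = iota m \<longleftrightarrow> (\<forall>i\<in>{1..m}. phi r v i = Fin i)"
proof
  assume E: "restr 0 m (left_part m v) = iota m"
  show "\<forall>i\<in>{1..m}. phi r v i = Fin i"
  proof
    fix i assume i: "i \<in> {1..m}"
    have a: "v i i" using fun_cong[OF fun_cong[OF E, of i], of i] i by (simp add: restr_def left_part_def iota_def)
    have i1: "i - 1 \<le> m" "\<not> i \<le> i - 1" "i \<le> m" using i by auto
    have b: "\<not> v (i - 1) i" using fun_cong[OF fun_cong[OF E, of "i - 1"], of i] i1 by (simp add: restr_def left_part_def iota_def)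
    show "phi r v i = Fin i" using phi_Fin[OF s, of i i] a b i mr by (simp add: jmpf_def)
  qed
next
  assume P: "\<forall>i\<in>{1..m}. phi r v i = Fin i"
  show "restr 0 m (left_part m v) = iota m"
  proof (intro ext)
    fix p j
    show "restr 0 m (left_part m v) p j = iota m p j"
    proof (cases "1 \<le> j \<and> j \<le> m \<and> p \<le> m")
      case True
      have "j \<in> {1..m}" using True by simp
      then have "phi r v j = Fin j" using P by blast
      moreover have "1 \<le> j" "j \<le> r" using True mr by auto
      ultimately have "jmpf v j j" using phi_Fin[OF s, of j j] by blast
      then have J: "v j j" "\<not> v (j - 1) j" unfolding jmpf_def by auto
      have "v p j \<longleftrightarrow> j \<le> p"
      proof
        assume "v p j"
        show "j \<le> p"
        proof (rule ccontr)
          assume "\<not> j \<le> p"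
          then have "p \<le> j - 1" "j - 1 \<le> r" using True mr by auto
          then have "v (j - 1) j" using simplex_mono[OF s, of p "j - 1" j] \<open>v p j\<close> by blast
          then show False using J by simp
        qed
      next
        assume "j \<le> p"
        moreover have "p \<le> r" using True mr by simp
        ultimately show "v p j" using simplex_mono[OF s, of j p j] J by blast
      qed
      then show ?thesis using True by (simp add: restr_def left_part_def iota_def)
    next
      case False
      have "\<not> v p 0"
      proof
        assume "v p 0"
        from simplex_rng[OF s this] show False by simp
      qed
      show ?thesis
      proof (cases "j = 0")
        case True then show ?thesis using \<open>\<not> v p 0\<close> by (simp add: restr_def left_part_def iota_def)
      next
        case False2: False
        then have "\<not> (j \<le> m \<and> p \<le> m)" using False by simp
        then show ?thesis unfolding restr_def left_part_def iota_def by auto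
      qed
    qed
  qed
qed

lemma cond3_char: assumes s: "simplex (m + n) r v" and m1: "1 \<le> m" and mr: "m \<le> r"
  shows "(\<exists>s :: nat \<Rightarrow> nat.
                  m < s m \<and> s r \<le> m + n \<and>
                  (\<forall>p q. m \<le> p \<and> p < q \<and> q \<le> r \<longrightarrow> s p < s q) \<and>
                  (\<forall>p\<in>{m..r}. phi r v (s p) = Fin p)) \<longleftrightarrow> G (jmpf v) m (m + n) (m - 1) r"
proof -
  have Sc: "Suc (m - 1) = m" using m1 by simp
  have ph: "phi r v (f p) = Fin p \<longleftrightarrow> jmpf v (f p) p" if "p \<in> {m..r}" for f p
    using phi_Fin[OF s, of p] that m1 by auto
  show ?thesis
  proof
    assume "\<exists>s :: nat \<Rightarrow> nat.
                  m < s m \<and> s r \<le> m + n \<and>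
                  (\<forall>p q. m \<le> p \<and> p < q \<and> q \<le> r \<longrightarrow> s p < s q) \<and>
                  (\<forall>p\<in>{m..r}. phi r v (s p) = Fin p)"
    then obtain f where f: "m < f m" "f r \<le> m + n" "\<forall>p q. m \<le> p \<and> p < q \<and> q \<le> r \<longrightarrow> f p < f q"
      "\<forall>p\<in>{m..r}. phi r v (f p) = Fin p" by blast
    show "G (jmpf v) m (m + n) (m - 1) r"
      by (rule G_seq2[of "m - 1" r m f]) (use f ph mr m1 Sc in auto)
  next
    assume g: "G (jmpf v) m (m + n) (m - 1) r"
    have "m - 1 < r" using mr m1 by simp
    from G_seq1[OF g this] obtain f where f: "m < f m" "f r \<le> m + n"
      "\<forall>p q. m \<le> p \<and> p < q \<and> q \<le> r \<longrightarrow> f p < f q" "\<forall>p\<in>{m..r}. jmpf v (f p) p"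
      unfolding Sc by blast
    show "\<exists>s :: nat \<Rightarrow> nat.
                  m < s m \<and> s r \<le> m + n \<and>
                  (\<forall>p q. m \<le> p \<and> p < q \<and> q \<le> r \<longrightarrow> s p < s q) \<and>
                  (\<forall>p\<in>{m..r}. phi r v (s p) = Fin p)"
      using f ph by (intro exI[of _ f]) auto
  qed
qed

theorem lemma6p5:
  fixes m n r :: nat and v :: "nat \<Rightarrow> nat \<Rightarrow> bool"
  assumes "1 \<le> m"
    and "simplex (m + n) r v"
    and "\<not> gray_pow (m + n) r v"
  shows "gray (gray_pow_e m) m (gray_pow n) r v \<longleftrightarrow>
           (m \<le> r \<and>
            (\<forall>i\<in>{1..m}. phi r v i = Fin i) \<and>
            \<not> (\<exists>s :: nat \<Rightarrow> nat.
                  m < s m \<and> s r \<le> m + n \<and>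
                  (\<forall>p q. m \<le> p \<and> p < q \<and> q \<le> r \<longrightarrow> s p < s q) \<and>
                  (\<forall>p\<in>{m..r}. phi r v (s p) = Fin p)))"
proof -
  let ?J = "jmpf v"
  let ?I = "restr 0 m (left_part m v) = iota m"
  have H: "G ?J 0 (m + n) 0 r" using gray_pow_char[OF assms(2)] assms(3) by simp
  have Lc: "gray_pow_e m i (restr 0 i (left_part m v)) \<longleftrightarrow> \<not> G ?J 0 m 0 i \<or> (i = m \<and> ?I)"
    if "i \<le> r" for i
  proof -
    have "simplex m i (restr 0 i (left_part m v))" using simplex_left[OF assms(2) that] .
    then show ?thesis using gray_pow_char G_left by (auto simp: gray_pow_e_def)
  qed
  have Rc: "gray_pow n (r - i) (restr i r (right_part m v)) \<longleftrightarrow> \<not> G ?J m (m + n) i r"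
    if "i \<le> r" for i
  proof -
    have "simplex n (r - i) (restr i r (right_part m v))" using simplex_right[OF assms(2) that] .
    then show ?thesis using gray_pow_char G_right[OF that] by simp
  qed
  have LHS: "gray (gray_pow_e m) m (gray_pow n) r v \<longleftrightarrow>
     (\<forall>i\<le>r. \<not> G ?J 0 m 0 i \<or> (i = m \<and> ?I) \<or> \<not> G ?J m (m + n) i r)"
    unfolding gray_def using Lc Rc by auto
  show ?thesis
  proof
    assume "gray (gray_pow_e m) m (gray_pow n) r v"
    then have A: "\<forall>i\<le>r. \<not> G ?J 0 m 0 i \<or> (i = m \<and> ?I) \<or> \<not> G ?J m (m + n) i r" using LHS by simp
    from G_split[OF H, of m] obtain k where k: "k \<le> r" "G ?J 0 m 0 k" "G ?J m (m + n) k r" by auto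
    then have km: "k = m" and I: ?I using A by auto
    then have mr: "m \<le> r" using k by simp
    have P: "\<forall>i\<in>{1..m}. phi r v i = Fin i" using iota_char[OF assms(2) mr] I by simp
    have "\<not> G ?J m (m + n) (m - 1) r"
    proof
      assume g: "G ?J m (m + n) (m - 1) r"
      have "G ?J 0 (m - 1) 0 (m - 1)"
      proof (rule G_diag)
        fix p assume "1 \<le> p" "p \<le> m - 1"
        then show "?J p p" using P phi_Fin[OF assms(2), of p p] mr by auto
      qed
      then have "G ?J 0 m 0 (m - 1)" by (rule G_mono_b) simp
      moreover have "m - 1 \<le> r" "m - 1 \<noteq> m" using assms(1) mr by auto
      ultimately show False using A[rule_format, of "m - 1"] g by blast
    qed
    then show "m \<le> r \<and> (\<forall>i\<in>{1..m}. phi r v i = Fin i) \<and> \<not> (\<exists>s :: nat \<Rightarrow> nat.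
                  m < s m \<and> s r \<le> m + n \<and>
                  (\<forall>p q. m \<le> p \<and> p < q \<and> q \<le> r \<longrightarrow> s p < s q) \<and>
                  (\<forall>p\<in>{m..r}. phi r v (s p) = Fin p))"
      using mr P cond3_char[OF assms(2) assms(1) mr] by simp
  next
    assume R: "m \<le> r \<and> (\<forall>i\<in>{1..m}. phi r v i = Fin i) \<and> \<not> (\<exists>s :: nat \<Rightarrow> nat.
                  m < s m \<and> s r \<le> m + n \<and>
                  (\<forall>p q. m \<le> p \<and> p < q \<and> q \<le> r \<longrightarrow> s p < s q) \<and>
                  (\<forall>p\<in>{m..r}. phi r v (s p) = Fin p))"
    then have mr: "m \<le> r" and I: ?I and N: "\<not> G ?J m (m + n) (m - 1) r"
      using iota_char[OF assms(2)] cond3_char[OF assms(2) assms(1)] by auto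
    have "\<forall>i\<le>r. \<not> G ?J 0 m 0 i \<or> (i = m \<and> ?I) \<or> \<not> G ?J m (m + n) i r"
    proof (intro allI impI)
      fix i assume "i \<le> r"
      show "\<not> G ?J 0 m 0 i \<or> (i = m \<and> ?I) \<or> \<not> G ?J m (m + n) i r"
      proof (cases "G ?J 0 m 0 i")
        case True
        then have "i \<le> m" using G_bound by fastforce
        show ?thesis
        proof (cases "i = m")
          case False
          then have "i \<le> m - 1" using \<open>i \<le> m\<close> by simp
          then have "\<not> G ?J m (m + n) i r" using N G_mono_c by blast
          then show ?thesis by simp
        qed (use I in simp)
      qed simp
    qed
    then show "gray (gray_pow_e m) m (gray_pow n) r v" using LHS by simp
  qed
qed

end
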